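(* Let $m\ge o\ge 0$ and $n\ge 0$ be integers with $m+n+o\ge 4$ such that the graph $T_n\vee(K_m+K_o)$ is connected and is neither a complete graph nor a complete bipartite graph. Let the vertices of $K_m$, $T_n$, $K_o$ carry the indeterminates $x_1,\dots,x_m$, $y_1,\dots,y_n$, $z_1,\dots,z_o$ respectively. Then the third critical ideal $I_3=I_3(T_n\vee(K_m+K_o),\{X,Y,Z\})$ is: - $\langle 2, x_1+1,\dots,x_m+1, y_1,\dots,y_n, z_1+1,\dots,z_o+1\rangle$ if $m,n,o\ge 2$; - $\langle x_1+1,\dots,x_m+1, y_1+2, z_1+1,\dots,z_o+1\rangle$ if $m\ge 2$, $n=1$, $o\ge 2$; - $\langle x_1+1,\dots,x_m+1, y_1,\dots,y_n, z_1-1\rangle$ if $m\ge 2$, $n\ge 2$, $o=1$; - $\langle x_1+z_1, y_1,\dots,y_n\rangle$ if $m=1$, $n\ge 3$, $o=1$; - $\langle x_1+z_1,\ y_1+y_2,\ y_2z_1\rangle$ if $m=1$, $n=2$, $o=1$; - $\langle x_1+1,\dots,x_m+1,\ z_1y_1+z_1-1\rangle$ if $m\ge 2$, $n=1$, $o=1$; - $\langle x_1+1,\dots,x_m+1, y_1,\dots,y_n\rangle$ if $m\ge 3$, $n\ge 3$, $o=0$; - $\langle x_1+x_2+2, y_1,\dots,y_n\rangle$ if $m=2$, $n\ge 3$, $o=0$; - $\langle x_1+1,\dots,x_m+1,\ y_1y_2+y_1+y_2\rangle$ if $m\ge 3$, $n=2$, $o=0$; - $\langle x_1+x_2+2,\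 x_2y_1+y_1,\ x_2y_2+y_2,\ y_1y_2+y_1+y_2\rangle$ if $m=2$, $n=2$, $o=0$.
   Context: For a finite graph $G$ with an indeterminate $x_u$ for each vertex $u$, the generalized Laplacian matrix $L(G,X_G)$ is the matrix indexed by $V(G)$ with $(u,u)$-entry $x_u$ and $(u,v)$-entry $-m_{uv}$ for $u\ne v$, $m_{uv}$ being the number of edges between $u$ and $v$. The third critical ideal $I_3(G,X_G)$ is the ideal of $\mathbb{Z}[X_G]$ generated by all $3\times 3$ minors of $L(G,X_G)$. $T_n$ is the edgeless graph on $n$ vertices, $K_m$ the complete graph on $m$ vertices ($K_0$ is empty), $+$ denotes disjoint union and $G\vee H$ the join (disjoint union plus all edges between $G$ and $H$). *)

theory Defs
  imports "HOL-Library.Poly_Mapping"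
begin

text \<open>Multivariate polynomials over the integers with indeterminates indexed by 'v:
  a polynomial is a finitely supported map from monomials (exponent vectors)
  to integer coefficients.\<close>
type_synonym 'v zpoly = "('v \<Rightarrow>\<^sub>0 nat) \<Rightarrow>\<^sub>0 int"

definition Var :: "'v \<Rightarrow> 'v zpoly" where
  "Var v = Poly_Mapping.single (Poly_Mapping.single v 1) 1"

definition ideal_gen :: "'a::comm_ring_1 set \<Rightarrow> 'a set" where
  "ideal_gen S = {x. \<exists>F c. finite F \<and> F \<subseteq> S \<and> x = (\<Sum>g\<in>F. c g * g)}"

definition gen_laplacian :: "('v \<Rightarrow> 'v \<Rightarrow> nat) \<Rightarrow> 'v \<Rightarrow> 'v \<Rightarrow> 'v zpoly" where
  "gen_laplacian mult u v = (if u = v then Var u else - of_nat (mult u v))"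

definition det3 :: "('r \<Rightarrow> 'c \<Rightarrow> 'a::comm_ring_1) \<Rightarrow> 'r \<Rightarrow> 'r \<Rightarrow> 'r \<Rightarrow> 'c \<Rightarrow> 'c \<Rightarrow> 'c \<Rightarrow> 'a" where
  "det3 M r1 r2 r3 c1 c2 c3 =
     M r1 c1 * M r2 c2 * M r3 c3 + M r1 c2 * M r2 c3 * M r3 c1 + M r1 c3 * M r2 c1 * M r3 c2
   - M r1 c3 * M r2 c2 * M r3 c1 - M r1 c1 * M r2 c3 * M r3 c2 - M r1 c2 * M r2 c1 * M r3 c3"

definition critical_ideal3 :: "'v set \<Rightarrow> ('v \<Rightarrow> 'v \<Rightarrow> nat) \<Rightarrow> 'v zpoly set" where
  "critical_ideal3 V mult = ideal_gen
     {det3 (gen_laplacian mult) a b c d e f | a b c d e f.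
        a \<in> V \<and> b \<in> V \<and> c \<in> V \<and> distinct [a, b, c] \<and>
        d \<in> V \<and> e \<in> V \<and> f \<in> V \<and> distinct [d, e, f]}"

definition graph_connected :: "'v set \<Rightarrow> ('v \<Rightarrow> 'v \<Rightarrow> bool) \<Rightarrow> bool" where
  "graph_connected V E = (\<forall>u\<in>V. \<forall>v\<in>V. (u, v) \<in> {(a, b). a \<in> V \<and> b \<in> V \<and> E a b}\<^sup>*)"

definition graph_complete :: "'v set \<Rightarrow> ('v \<Rightarrow> 'v \<Rightarrow> bool) \<Rightarrow> bool" where
  "graph_complete V E = (\<forall>u\<in>V. \<forall>v\<in>V. u \<noteq> v \<longrightarrow> E u v)"

definition graph_complete_bipartite :: "'v set \<Rightarrow> ('v \<Rightarrow> 'v \<Rightarrow> bool) \<Rightarrow> bool" where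
  "graph_complete_bipartite V E = (\<exists>A B. A \<union> B = V \<and> A \<inter> B = {} \<and> A \<noteq> {} \<and> B \<noteq> {} \<and>
      (\<forall>u\<in>A. \<forall>v\<in>B. E u v \<and> E v u) \<and>
      (\<forall>u\<in>A. \<forall>v\<in>A. \<not> E u v) \<and> (\<forall>u\<in>B. \<forall>v\<in>B. \<not> E u v))"

text \<open>The graph T_n \<or> (K_m + K_o): vertices VX i (K_m), VY j (T_n), VZ k (K_o), indices from 1.\<close>
datatype vtx = VX nat | VY nat | VZ nat

definition tkk_vertices :: "nat \<Rightarrow> nat \<Rightarrow> nat \<Rightarrow> vtx set" where
  "tkk_vertices m n q = VX ` {1..m} \<union> VY ` {1..n} \<union> VZ ` {1..q}"

fun tkk_adj :: "vtx \<Rightarrow> vtx \<Rightarrow> bool" where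
  "tkk_adj (VX i) (VX j) = (i \<noteq> j)"
| "tkk_adj (VZ i) (VZ j) = (i \<noteq> j)"
| "tkk_adj (VY _) (VX _) = True"
| "tkk_adj (VX _) (VY _) = True"
| "tkk_adj (VY _) (VZ _) = True"
| "tkk_adj (VZ _) (VY _) = True"
| "tkk_adj (VY _) (VY _) = False"
| "tkk_adj (VX _) (VZ _) = False"
| "tkk_adj (VZ _) (VX _) = False"

definition tkk_mult :: "vtx \<Rightarrow> vtx \<Rightarrow> nat" where
  "tkk_mult u v = (if tkk_adj u v then 1 else 0)"

end

theory Submission
  imports Defs
begin

definition is_ideal :: "'a::comm_ring_1 set \<Rightarrow> bool" where
  "is_ideal I \<longleftrightarrow> 0 \<in> I \<and> (\<forall>x\<in>I. \<forall>y\<in>I. x + y \<in> I) \<and> (\<forall>c. \<forall>x\<in>I. c * x \<in> I)"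

lemma ideal_zero: "is_ideal I \<Longrightarrow> 0 \<in> I" by (simp add: is_ideal_def)
lemma ideal_add: "is_ideal I \<Longrightarrow> x \<in> I \<Longrightarrow> y \<in> I \<Longrightarrow> x + y \<in> I" by (simp add: is_ideal_def)
lemma ideal_mult: "is_ideal I \<Longrightarrow> x \<in> I \<Longrightarrow> c * x \<in> I" by (simp add: is_ideal_def)
lemma ideal_mult2: "is_ideal I \<Longrightarrow> x \<in> I \<Longrightarrow> x * c \<in> I"
  by (metis ideal_mult mult.commute)
lemma ideal_neg: "is_ideal I \<Longrightarrow> x \<in> I \<Longrightarrow> - x \<in> I"
  using ideal_mult[of I x "-1"] by simp
lemma ideal_neg_iff: "is_ideal I \<Longrightarrow> - x \<in> I \<longleftrightarrow> x \<in> I"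
  using ideal_neg[of I x] ideal_neg[of I "-x"] by auto
lemma ideal_diff: "is_ideal I \<Longrightarrow> x \<in> I \<Longrightarrow> y \<in> I \<Longrightarrow> x - y \<in> I"
  using ideal_add[of I x "-y"] ideal_neg[of I y] by simp

lemma ideal_gen_memI: "finite F \<Longrightarrow> F \<subseteq> S \<Longrightarrow> x = (\<Sum>g\<in>F. c g * g) \<Longrightarrow> x \<in> ideal_gen S"
  unfolding ideal_gen_def by blast

lemma ideal_gen_memE:
  assumes "x \<in> ideal_gen S"
  obtains F c where "finite F" "F \<subseteq> S" "x = (\<Sum>g\<in>F. c g * g)"
  using assms unfolding ideal_gen_def by blast

lemma ideal_gen_is_ideal: "is_ideal (ideal_gen S)"
  unfolding is_ideal_def
proof (intro conjI ballI allI)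
  show "0 \<in> ideal_gen S" by (rule ideal_gen_memI[of "{}"]) auto
next
  fix x y assume "x \<in> ideal_gen S" "y \<in> ideal_gen S"
  then obtain F1 c1 F2 c2 where F: "finite F1" "F1 \<subseteq> S" "x = (\<Sum>g\<in>F1. c1 g * g)"
     "finite F2" "F2 \<subseteq> S" "y = (\<Sum>g\<in>F2. c2 g * g)" by (metis ideal_gen_memE)
  define c where "c g = (if g \<in> F1 then c1 g else 0) + (if g \<in> F2 then c2 g else 0)" for g
  have gen: "(\<Sum>g\<in>F1 \<union> F2. (if g \<in> G then cc g else 0) * g) = (\<Sum>g\<in>G. cc g * g)"
    if "G \<subseteq> F1 \<union> F2" for G cc
  proof -
    have "(\<Sum>g\<in>F1 \<union> F2. (if g \<in> G then cc g else 0) * g) = (\<Sum>g\<in>F1 \<union> F2. if g \<in> G then cc g * g else 0)"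
      by (rule sum.cong) auto
    also have "\<dots> = (\<Sum>g\<in>(F1 \<union> F2) \<inter> G. cc g * g)"
      using F by (simp add: sum.inter_restrict)
    also have "(F1 \<union> F2) \<inter> G = G" using that by blast
    finally show ?thesis .
  qed
  have "x + y = (\<Sum>g\<in>F1 \<union> F2. (if g \<in> F1 then c1 g else 0) * g) + (\<Sum>g\<in>F1 \<union> F2. (if g \<in> F2 then c2 g else 0) * g)"
    using gen[of F1 c1] gen[of F2 c2] F by simp
  also have "\<dots> = (\<Sum>g\<in>F1 \<union> F2. c g * g)"
    unfolding sum.distrib[symmetric] c_def by (rule sum.cong) (auto simp: distrib_right)
  finally show "x + y \<in> ideal_gen S" using F by (intro ideal_gen_memI[of "F1 \<union> F2" _ _ c]) auto
next
  fix c x assume "x \<in> ideal_gen S"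
  then obtain F c1 where F: "finite F" "F \<subseteq> S" "x = (\<Sum>g\<in>F. c1 g * g)" by (metis ideal_gen_memE)
  then have "c * x = (\<Sum>g\<in>F. (c * c1 g) * g)" by (simp add: sum_distrib_left mult.assoc)
  then show "c * x \<in> ideal_gen S" using F by (intro ideal_gen_memI[of F _ _ "\<lambda>g. c * c1 g"]) auto
qed

lemma ideal_gen_in: "s \<in> S \<Longrightarrow> s \<in> ideal_gen S"
  by (rule ideal_gen_memI[of "{s}" _ _ "\<lambda>_. 1"]) auto

lemma ideal_gen_least:
  assumes I: "is_ideal I" and S: "S \<subseteq> I" shows "ideal_gen S \<subseteq> I"
proof
  fix x assume "x \<in> ideal_gen S"
  then obtain F c where F: "finite F" "F \<subseteq> S" "x = (\<Sum>g\<in>F. c g * g)" by (metis ideal_gen_memE)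
  have "F \<subseteq> S \<Longrightarrow> (\<Sum>g\<in>F. c g * g) \<in> I" using F(1)
  proof (induction F rule: finite_induct)
    case empty then show ?case using I by (simp add: ideal_zero)
  next
    case (insert a F) then show ?case using I S by (auto intro!: ideal_add ideal_mult)
  qed
  then show "x \<in> I" using F by simp
qed

lemma prod3_cong:
  assumes I: "is_ideal I" and "p1 - q1 \<in> I" "p2 - q2 \<in> I" "p3 - q3 \<in> I"
  shows "p1 * p2 * p3 - q1 * q2 * q3 \<in> I"
proof -
  have "p1 * p2 * p3 - q1 * q2 * q3 = (p2 * p3) * (p1 - q1) + (q1 * p3) * (p2 - q2) + (q1 * q2) * (p3 - q3)"
    by (simp add: algebra_simps)
  then show ?thesis using assms by (auto intro!: ideal_add ideal_mult)
qed

lemma det3_cong: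
  assumes I: "is_ideal I" and E: "\<And>u v. u \<in> V \<Longrightarrow> v \<in> V \<Longrightarrow> M u v - N u v \<in> I"
    and V: "a \<in> V" "b \<in> V" "c \<in> V" "d \<in> V" "e \<in> V" "f \<in> V"
  shows "det3 M a b c d e f - det3 N a b c d e f \<in> I"
proof -
  let ?P = "\<lambda>r1 c1 r2 c2 r3 c3. M r1 c1 * M r2 c2 * M r3 c3 - N r1 c1 * N r2 c2 * N r3 c3"
  have P: "?P r1 c1 r2 c2 r3 c3 \<in> I" if "r1 \<in> V" "c1 \<in> V" "r2 \<in> V" "c2 \<in> V" "r3 \<in> V" "c3 \<in> V"
    for r1 c1 r2 c2 r3 c3 using that by (intro prod3_cong[OF I] E)
  have "det3 M a b c d e f - det3 N a b c d e f =
     ?P a d b e c f + ?P a e b f c d + ?P a f b d c e - ?P a f b e c d - ?P a d b f c e - ?P a e b d c f"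
    unfolding det3_def by (simp add: algebra_simps)
  moreover have "x1 + x2 + x3 - x4 - x5 - x6 \<in> I" if "x1 \<in> I" "x2 \<in> I" "x3 \<in> I" "x4 \<in> I" "x5 \<in> I" "x6 \<in> I" for x1 x2 x3 x4 x5 x6
    using that by (intro ideal_add[OF I] ideal_diff[OF I])
  ultimately show ?thesis using V P by presburger
qed

lemma det3_perm_in:
  assumes I: "is_ideal I" and h: "det3 M a b c d e f \<in> I"
  shows "det3 M b a c d e f \<in> I \<and> det3 M a c b d e f \<in> I \<and> det3 M b c a d e f \<in> I \<and>
         det3 M c a b d e f \<in> I \<and> det3 M c b a d e f \<in> I"
proof -
  have "det3 M b a c d e f = - det3 M a b c d e f" "det3 M a c b d e f = - det3 M a b c d e f"
    "det3 M b c a d e f = det3 M a b c d e f" "det3 M c a b d e f = det3 M a b c d e f"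
    "det3 M c b a d e f = - det3 M a b c d e f"
    unfolding det3_def by (simp_all add: algebra_simps)
  then show ?thesis using h ideal_neg[OF I h] by simp
qed

lemma det3_cperm_in:
  assumes I: "is_ideal I" and h: "det3 M a b c d e f \<in> I"
  shows "det3 M a b c e d f \<in> I \<and> det3 M a b c d f e \<in> I \<and> det3 M a b c e f d \<in> I \<and>
         det3 M a b c f d e \<in> I \<and> det3 M a b c f e d \<in> I"
proof -
  have "det3 M a b c e d f = - det3 M a b c d e f" "det3 M a b c d f e = - det3 M a b c d e f"
    "det3 M a b c e f d = det3 M a b c d e f" "det3 M a b c f d e = det3 M a b c d e f"
    "det3 M a b c f e d = - det3 M a b c d e f"
    unfolding det3_def by (simp_all add: algebra_simps)
  then show ?thesis using h ideal_neg[OF I h] by simp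
qed

lemma det3_eq_rows: "det3 M a a c d e f = 0" "det3 M a b a d e f = 0" "det3 M a b b d e f = 0"
  unfolding det3_def by (simp_all add: algebra_simps)
lemma det3_eq_cols: "det3 M a b c d d f = 0" "det3 M a b c d e d = 0" "det3 M a b c d e e = 0"
  unfolding det3_def by (simp_all add: algebra_simps)

lemma rows3:
  assumes I: "is_ideal I" and abc: "a \<in> {p1,p2,p3}" "b \<in> {p1,p2,p3}" "c \<in> {p1,p2,p3}"
    and h: "det3 M p1 p2 p3 d e f \<in> I"
  shows "det3 M a b c d e f \<in> I"
  using abc by (elim insertE emptyE; simp add: h det3_perm_in[OF I h] ideal_zero[OF I] det3_eq_rows)

lemma cols3:
  assumes I: "is_ideal I" and abc: "d \<in> {p1,p2,p3}" "e \<in> {p1,p2,p3}" "f \<in> {p1,p2,p3}"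
    and h: "det3 M a b c p1 p2 p3 \<in> I"
  shows "det3 M a b c d e f \<in> I"
  using abc by (elim insertE emptyE; simp add: h det3_cperm_in[OF I h] ideal_zero[OF I] det3_eq_cols)

lemma rows4:
  assumes I: "is_ideal I" and abc: "a \<in> {p1,p2,p3,p4}" "b \<in> {p1,p2,p3,p4}" "c \<in> {p1,p2,p3,p4}"
    and h: "det3 M p1 p2 p3 d e f \<in> I" "det3 M p1 p2 p4 d e f \<in> I"
       "det3 M p1 p3 p4 d e f \<in> I" "det3 M p2 p3 p4 d e f \<in> I"
  shows "det3 M a b c d e f \<in> I"
  using abc by (elim insertE emptyE; simp add: h det3_perm_in[OF I h(1)] det3_perm_in[OF I h(2)]
    det3_perm_in[OF I h(3)] det3_perm_in[OF I h(4)] ideal_zero[OF I] det3_eq_rows)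

lemma cols4:
  assumes I: "is_ideal I" and abc: "d \<in> {p1,p2,p3,p4}" "e \<in> {p1,p2,p3,p4}" "f \<in> {p1,p2,p3,p4}"
    and h: "det3 M a b c p1 p2 p3 \<in> I" "det3 M a b c p1 p2 p4 \<in> I"
       "det3 M a b c p1 p3 p4 \<in> I" "det3 M a b c p2 p3 p4 \<in> I"
  shows "det3 M a b c d e f \<in> I"
  using abc by (elim insertE emptyE; simp add: h det3_cperm_in[OF I h(1)] det3_cperm_in[OF I h(2)]
    det3_cperm_in[OF I h(3)] det3_cperm_in[OF I h(4)] ideal_zero[OF I] det3_eq_cols)


abbreviation LL where "LL \<equiv> gen_laplacian tkk_mult"

lemma LL_simps[simp]:
  "LL (VX i) (VX j) = (if i = j then Var (VX i) else -1)"
  "LL (VY i) (VY j) = (if i = j then Var (VY i) else 0)"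
  "LL (VZ i) (VZ j) = (if i = j then Var (VZ i) else -1)"
  "LL (VX i) (VY j) = -1" "LL (VY j) (VX i) = -1"
  "LL (VZ i) (VY j) = -1" "LL (VY j) (VZ i) = -1"
  "LL (VX i) (VZ j) = 0" "LL (VZ j) (VX i) = 0"
  by (auto simp: gen_laplacian_def tkk_mult_def)

lemma mem_V[simp]:
  "VX i \<in> tkk_vertices m n q \<longleftrightarrow> 1 \<le> i \<and> i \<le> m"
  "VY i \<in> tkk_vertices m n q \<longleftrightarrow> 1 \<le> i \<and> i \<le> n"
  "VZ i \<in> tkk_vertices m n q \<longleftrightarrow> 1 \<le> i \<and> i \<le> q"
  by (auto simp: tkk_vertices_def)

lemma CI_ideal: "is_ideal (critical_ideal3 V mult)"
  unfolding critical_ideal3_def by (rule ideal_gen_is_ideal)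

lemma minor_in:
  assumes "a \<in> V" "b \<in> V" "c \<in> V" "d \<in> V" "e \<in> V" "f \<in> V" "distinct [a,b,c]" "distinct [d,e,f]"
  shows "det3 (gen_laplacian mult) a b c d e f \<in> critical_ideal3 V mult"
  unfolding critical_ideal3_def by (rule ideal_gen_in) (use assms in blast)

datatype cl = C1 | C2 | C3

lemma cl_in: "x \<in> {C1, C2, C3}" by (cases x) auto

lemma subset_via_classes:
  assumes I: "is_ideal I"
    and E: "\<And>u v. u \<in> V \<Longrightarrow> v \<in> V \<Longrightarrow> gen_laplacian mult u v - B (cls u) (cls v) \<in> I"
    and D: "det3 B C1 C2 C3 C1 C2 C3 \<in> I"
  shows "critical_ideal3 V mult \<subseteq> I"
  unfolding critical_ideal3_def
proof (rule ideal_gen_least[OF I], safe)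
  fix a b c d e f assume V: "a \<in> V" "b \<in> V" "c \<in> V" "d \<in> V" "e \<in> V" "f \<in> V"
  have BB: "det3 B x y z x' y' z' \<in> I" for x y z x' y' z'
    by (rule rows3[OF I cl_in cl_in cl_in], rule cols3[OF I cl_in cl_in cl_in D])
  have "det3 (\<lambda>u v. B (cls u) (cls v)) a b c d e f = det3 B (cls a) (cls b) (cls c) (cls d) (cls e) (cls f)"
    by (simp add: det3_def)
  then have N: "det3 (\<lambda>u v. B (cls u) (cls v)) a b c d e f \<in> I" using BB by simp
  have "det3 (gen_laplacian mult) a b c d e f - det3 (\<lambda>u v. B (cls u) (cls v)) a b c d e f \<in> I"
    by (rule det3_cong[OF I _ V]) (rule E)
  from ideal_add[OF I this N] show "det3 (gen_laplacian mult) a b c d e f \<in> I" by simp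
qed

lemma subset_4pts:
  assumes I: "is_ideal I" and V: "V = {p1, p2, p3, p4}"
    and h: "\<And>a b c. (a, b, c) \<in> {(p1,p2,p3), (p1,p2,p4), (p1,p3,p4), (p2,p3,p4)} \<Longrightarrow>
            det3 (gen_laplacian mult) a b c p1 p2 p3 \<in> I \<and> det3 (gen_laplacian mult) a b c p1 p2 p4 \<in> I \<and>
            det3 (gen_laplacian mult) a b c p1 p3 p4 \<in> I \<and> det3 (gen_laplacian mult) a b c p2 p3 p4 \<in> I"
  shows "critical_ideal3 V mult \<subseteq> I"
  unfolding critical_ideal3_def
proof (rule ideal_gen_least[OF I], safe)
  fix a b c d e f assume abc: "a \<in> V" "b \<in> V" "c \<in> V" "d \<in> V" "e \<in> V" "f \<in> V"
  have m: "a \<in> {p1,p2,p3,p4}" "b \<in> {p1,p2,p3,p4}" "c \<in> {p1,p2,p3,p4}"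
       "d \<in> {p1,p2,p3,p4}" "e \<in> {p1,p2,p3,p4}" "f \<in> {p1,p2,p3,p4}"
    using abc unfolding V by auto
  have R: "det3 (gen_laplacian mult) x y z d e f \<in> I" if "(x, y, z) \<in> {(p1,p2,p3), (p1,p2,p4), (p1,p3,p4), (p2,p3,p4)}" for x y z
  proof -
    note hh = h[OF that]
    show ?thesis by (rule cols4[OF I m(4) m(5) m(6) hh[THEN conjunct1] hh[THEN conjunct2, THEN conjunct1]
       hh[THEN conjunct2, THEN conjunct2, THEN conjunct1] hh[THEN conjunct2, THEN conjunct2, THEN conjunct2]])
  qed
  show "det3 (gen_laplacian mult) a b c d e f \<in> I"
    by (rule rows4[OF I m(1) m(2) m(3)]; rule R; simp)
qed

lemma bip: "1 \<le> n \<Longrightarrow> graph_complete_bipartite (tkk_vertices 1 n 1) tkk_adj"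
  unfolding graph_complete_bipartite_def
proof (rule exI[of _ "{VX 1, VZ 1}"], rule exI[of _ "VY ` {1..n}"], intro conjI)
  show "{VX 1, VZ 1} \<union> VY ` {1..n} = tkk_vertices 1 n 1"
    unfolding tkk_vertices_def by auto
  assume "1 \<le> n"
  then show "VY ` {1..n} \<noteq> {}" by auto
qed auto


abbreviation CI :: "nat \<Rightarrow> nat \<Rightarrow> nat \<Rightarrow> vtx zpoly set" where
  "CI m n q \<equiv> critical_ideal3 (tkk_vertices m n q) tkk_mult"

fun mat3 :: "'a \<Rightarrow> 'a \<Rightarrow> 'a \<Rightarrow> 'a \<Rightarrow> 'a \<Rightarrow> 'a \<Rightarrow> 'a \<Rightarrow> 'a \<Rightarrow> 'a \<Rightarrow> cl \<Rightarrow> cl \<Rightarrow> 'a" where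
  "mat3 a b c d e f g h k C1 C1 = a" | "mat3 a b c d e f g h k C1 C2 = b" | "mat3 a b c d e f g h k C1 C3 = c"
| "mat3 a b c d e f g h k C2 C1 = d" | "mat3 a b c d e f g h k C2 C2 = e" | "mat3 a b c d e f g h k C2 C3 = f"
| "mat3 a b c d e f g h k C3 C1 = g" | "mat3 a b c d e f g h k C3 C2 = h" | "mat3 a b c d e f g h k C3 C3 = k"

lemma other1: obtains j :: nat where "1 \<le> j" "j \<le> 2" "j \<noteq> i" "i \<noteq> j"
  by (rule that[of "if i = 1 then 2 else 1"]) auto

lemma other2: obtains j k :: nat where "1 \<le> j" "j \<le> 3" "1 \<le> k" "k \<le> 3" "j \<noteq> i" "i \<noteq> j" "k \<noteq> i" "i \<noteq> k" "j \<noteq> k" "k \<noteq> j"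
  by (rule that[of "if i = 1 then 2 else 1" "if i \<le> 2 then 3 else 2"]) auto

lemma gx_q1:
  assumes "1 \<le> i" "i \<le> m" "2 \<le> m" "1 \<le> n" "1 \<le> q"
  shows "Var (VX i) + 1 \<in> CI m n q"
proof -
  obtain j where j: "1 \<le> j" "j \<le> 2" "j \<noteq> i" "i \<noteq> j" by (rule other1)
  have "det3 LL (VX i) (VX j) (VY 1) (VX i) (VY 1) (VZ 1) = Var (VX i) + 1"
    using j by (simp add: det3_def algebra_simps)
  moreover have "det3 LL (VX i) (VX j) (VY 1) (VX i) (VY 1) (VZ 1) \<in> CI m n q"
    using assms j by (intro minor_in) auto
  ultimately show ?thesis by simp
qed

lemma gx_3:
  assumes "1 \<le> i" "i \<le> m" "3 \<le> m" "2 \<le> n"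
  shows "Var (VX i) + 1 \<in> CI m n q"
proof -
  obtain j k where j: "1 \<le> j" "j \<le> 3" "1 \<le> k" "k \<le> 3" "j \<noteq> i" "i \<noteq> j" "k \<noteq> i" "i \<noteq> k" "j \<noteq> k" "k \<noteq> j"
    by (rule other2)
  have "det3 LL (VX i) (VX j) (VY 2) (VX i) (VX k) (VY 1) = - (Var (VX i) + 1)"
    using j by (simp add: det3_def algebra_simps)
  moreover have "det3 LL (VX i) (VX j) (VY 2) (VX i) (VX k) (VY 1) \<in> CI m n q"
    using assms j by (intro minor_in) auto
  ultimately show ?thesis by (metis ideal_neg_iff CI_ideal)
qed

lemma gz:
  assumes "1 \<le> k" "k \<le> q" "2 \<le> q" "1 \<le> n" "1 \<le> m"
  shows "Var (VZ k) + 1 \<in> CI m n q"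
proof -
  obtain j where j: "1 \<le> j" "j \<le> 2" "j \<noteq> k" "k \<noteq> j" by (rule other1)
  have "det3 LL (VZ k) (VZ j) (VY 1) (VZ k) (VY 1) (VX 1) = Var (VZ k) + 1"
    using j by (simp add: det3_def algebra_simps)
  moreover have "det3 LL (VZ k) (VZ j) (VY 1) (VZ k) (VY 1) (VX 1) \<in> CI m n q"
    using assms j by (intro minor_in) auto
  ultimately show ?thesis by simp
qed

lemma gy2:
  assumes "1 \<le> j" "j \<le> n" "2 \<le> n" "2 \<le> m" "1 \<le> q"
  shows "Var (VY j) \<in> CI m n q"
proof -
  obtain b where b: "1 \<le> b" "b \<le> 2" "b \<noteq> j" "j \<noteq> b" by (rule other1)
  have "det3 LL (VY j) (VY b) (VX 1) (VY j) (VX 2) (VZ 1) = - Var (VY j)"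
    using b by (simp add: det3_def algebra_simps)
  moreover have "det3 LL (VY j) (VY b) (VX 1) (VY j) (VX 2) (VZ 1) \<in> CI m n q"
    using assms b by (intro minor_in) auto
  ultimately show ?thesis by (simp add: ideal_neg_iff[OF CI_ideal])
qed

lemma gy3:
  assumes "1 \<le> j" "j \<le> n" "3 \<le> n" "1 \<le> m"
  shows "Var (VY j) \<in> CI m n q"
proof -
  obtain a b where b: "1 \<le> a" "a \<le> 3" "1 \<le> b" "b \<le> 3" "a \<noteq> j" "j \<noteq> a" "b \<noteq> j" "j \<noteq> b" "a \<noteq> b" "b \<noteq> a"
    by (rule other2)
  have "det3 LL (VY j) (VY b) (VX 1) (VY j) (VY a) (VX 1) = - Var (VY j)"
    using b by (simp add: det3_def algebra_simps)
  moreover have "det3 LL (VY j) (VY b) (VX 1) (VY j) (VY a) (VX 1) \<in> CI m n q"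
    using assms b by (intro minor_in) auto
  ultimately show ?thesis by (simp add: ideal_neg_iff[OF CI_ideal])
qed

lemma mXYZ:
  assumes "1 \<le> m" "1 \<le> n" "1 \<le> q"
  shows "Var (VX 1) * Var (VY 1) * Var (VZ 1) - Var (VX 1) - Var (VZ 1) \<in> CI m n q"
proof -
  have "det3 LL (VX 1) (VY 1) (VZ 1) (VX 1) (VY 1) (VZ 1) = Var (VX 1) * Var (VY 1) * Var (VZ 1) - Var (VX 1) - Var (VZ 1)"
    by (simp add: det3_def algebra_simps)
  moreover have "det3 LL (VX 1) (VY 1) (VZ 1) (VX 1) (VY 1) (VZ 1) \<in> CI m n q"
    using assms by (intro minor_in) auto
  ultimately show ?thesis by simp
qed

lemma case1:
  assumes m: "2 \<le> m" and n: "2 \<le> n" and q: "2 \<le> q"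
  shows "critical_ideal3 (tkk_vertices m n q) tkk_mult = ideal_gen
       ({2} \<union> {Var (VX i) + 1 | i. i \<in> {1..m}} \<union> {Var (VY j) | j. j \<in> {1..n}}
            \<union> {Var (VZ k) + 1 | k. k \<in> {1..q}})" (is "_ = ideal_gen ?G")
proof
  define J where "J = ideal_gen ?G"
  let ?J = J
  have J: "is_ideal ?J" unfolding J_def by (rule ideal_gen_is_ideal)
  have jx: "Var (VX i) + 1 \<in> ?J" if "1 \<le> i" "i \<le> m" for i using that unfolding J_def by (intro ideal_gen_in) auto
  have jy: "Var (VY i) \<in> ?J" if "1 \<le> i" "i \<le> n" for i using that unfolding J_def by (intro ideal_gen_in) auto
  have jz: "Var (VZ i) + 1 \<in> ?J" if "1 \<le> i" "i \<le> q" for i using that unfolding J_def by (intro ideal_gen_in) auto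
  have j2: "2 \<in> ?J" unfolding J_def by (intro ideal_gen_in) auto
  show "CI m n q \<subseteq> ideal_gen ?G" unfolding J_def[symmetric]
  proof (rule subset_via_classes[OF J, where B = "mat3 (-1) (-1) 0 (-1) 0 (-1) 0 (-1) (-1)"
        and cls = "\<lambda>u. case u of VX _ \<Rightarrow> C1 | VY _ \<Rightarrow> C2 | VZ _ \<Rightarrow> C3"])
    fix u v assume uv: "u \<in> tkk_vertices m n q" "v \<in> tkk_vertices m n q"
    show "LL u v - mat3 (-1) (-1) 0 (-1) 0 (-1) 0 (-1) (-1) (case u of VX _ \<Rightarrow> C1 | VY _ \<Rightarrow> C2 | VZ _ \<Rightarrow> C3)
            (case v of VX _ \<Rightarrow> C1 | VY _ \<Rightarrow> C2 | VZ _ \<Rightarrow> C3) \<in> ?J"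
      using uv by (cases u; cases v; simp add: ideal_zero[OF J] jx jy jz)
  next
    show "det3 (mat3 (-1) (-1) 0 (-1) 0 (-1) 0 (-1) (-1)) C1 C2 C3 C1 C2 C3 \<in> ?J"
      using j2 by (simp add: det3_def)
  qed
  show "ideal_gen ?G \<subseteq> CI m n q"
  proof (rule ideal_gen_least[OF CI_ideal], safe)
    have I: "is_ideal (CI m n q)" by (rule CI_ideal)
    have "(2::vtx zpoly) = (Var (VX 1) * Var (VY 1) * Var (VZ 1) - Var (VX 1) - Var (VZ 1))
       + (1 + Var (VY 1) - Var (VY 1) * (Var (VZ 1) + 1)) * (Var (VX 1) + 1)
       + (1 + Var (VY 1)) * (Var (VZ 1) + 1) - Var (VY 1)"
      by (simp add: algebra_simps)
    also have "\<dots> \<in> CI m n q"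
      using m n q by (intro ideal_add[OF I] ideal_diff[OF I] ideal_mult[OF I] mXYZ gx_q1 gz gy2) auto
    finally show "2 \<in> CI m n q" .
  qed (use m n q in \<open>auto intro: gx_q1 gz gy2\<close>)
qed


lemma le1_nat: "(i::nat) \<le> 1 \<longleftrightarrow> i = 0 \<or> i = 1" by auto
lemma le2_nat: "(i::nat) \<le> 2 \<longleftrightarrow> i = 0 \<or> i = 1 \<or> i = 2" by auto

lemma case2:
  assumes m: "2 \<le> m" and n: "n = 1" and q: "2 \<le> q"
  shows "critical_ideal3 (tkk_vertices m n q) tkk_mult = ideal_gen
       ({Var (VX i) + 1 | i. i \<in> {1..m}} \<union> {Var (VY 1) + 2}
            \<union> {Var (VZ k) + 1 | k. k \<in> {1..q}})" (is "_ = ideal_gen ?G")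
proof
  define J where "J = ideal_gen ?G"
  have J: "is_ideal J" unfolding J_def by (rule ideal_gen_is_ideal)
  have jx: "Var (VX i) + 1 \<in> J" if "1 \<le> i" "i \<le> m" for i using that unfolding J_def by (intro ideal_gen_in) auto
  have jy: "Var (VY 1) + 2 \<in> J" unfolding J_def by (intro ideal_gen_in) auto
  have jz: "Var (VZ i) + 1 \<in> J" if "1 \<le> i" "i \<le> q" for i using that unfolding J_def by (intro ideal_gen_in) auto
  show "CI m n q \<subseteq> ideal_gen ?G" unfolding J_def[symmetric]
  proof (rule subset_via_classes[OF J, where B = "mat3 (-1) (-1) 0 (-1) (-2) (-1) 0 (-1) (-1)"
        and cls = "\<lambda>u. case u of VX _ \<Rightarrow> C1 | VY _ \<Rightarrow> C2 | VZ _ \<Rightarrow> C3"])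
    fix u v assume uv: "u \<in> tkk_vertices m n q" "v \<in> tkk_vertices m n q"
    show "LL u v - mat3 (-1) (-1) 0 (-1) (-2) (-1) 0 (-1) (-1) (case u of VX _ \<Rightarrow> C1 | VY _ \<Rightarrow> C2 | VZ _ \<Rightarrow> C3)
            (case v of VX _ \<Rightarrow> C1 | VY _ \<Rightarrow> C2 | VZ _ \<Rightarrow> C3) \<in> J"
      using uv n by (cases u; cases v; auto simp add: ideal_zero[OF J] jx jy jz le1_nat jy[unfolded One_nat_def] jz[unfolded One_nat_def])
  next
    show "det3 (mat3 (-1) (-1) 0 (-1) (-2) (-1) 0 (-1) (-1)) C1 C2 C3 C1 C2 C3 \<in> J"
      using ideal_zero[OF J] by (simp add: det3_def)
  qed
  show "ideal_gen ?G \<subseteq> CI m n q"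
  proof (rule ideal_gen_least[OF CI_ideal], safe)
    have I: "is_ideal (CI m n q)" by (rule CI_ideal)
    have "Var (VY 1) + 2 = (Var (VX 1) * Var (VY 1) * Var (VZ 1) - Var (VX 1) - Var (VZ 1))
       + (1 + Var (VY 1) - Var (VY 1) * (Var (VZ 1) + 1)) * (Var (VX 1) + 1)
       + (Var (VY 1) + 1) * (Var (VZ 1) + 1)"
      by (simp add: algebra_simps)
    also have "\<dots> \<in> CI m n q"
      using m n q by (intro ideal_add[OF I] ideal_diff[OF I] ideal_mult[OF I] mXYZ gx_q1 gz) auto
    finally show "Var (VY 1) + 2 \<in> CI m n q" .
  qed (use m n q in \<open>auto intro: gx_q1 gz\<close>)
qed

lemma case3:
  assumes m: "2 \<le> m" and n: "2 \<le> n" and q: "q = 1"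
  shows "critical_ideal3 (tkk_vertices m n q) tkk_mult = ideal_gen
       ({Var (VX i) + 1 | i. i \<in> {1..m}} \<union> {Var (VY j) | j. j \<in> {1..n}} \<union> {Var (VZ 1) - 1})" (is "_ = ideal_gen ?G")
proof
  define J where "J = ideal_gen ?G"
  have J: "is_ideal J" unfolding J_def by (rule ideal_gen_is_ideal)
  have jx: "Var (VX i) + 1 \<in> J" if "1 \<le> i" "i \<le> m" for i using that unfolding J_def by (intro ideal_gen_in) auto
  have jy: "Var (VY i) \<in> J" if "1 \<le> i" "i \<le> n" for i using that unfolding J_def by (intro ideal_gen_in) auto
  have jz: "Var (VZ 1) - 1 \<in> J" unfolding J_def by (intro ideal_gen_in) auto
  show "CI m n q \<subseteq> ideal_gen ?G" unfolding J_def[symmetric]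
  proof (rule subset_via_classes[OF J, where B = "mat3 (-1) (-1) 0 (-1) 0 (-1) 0 (-1) 1"
        and cls = "\<lambda>u. case u of VX _ \<Rightarrow> C1 | VY _ \<Rightarrow> C2 | VZ _ \<Rightarrow> C3"])
    fix u v assume uv: "u \<in> tkk_vertices m n q" "v \<in> tkk_vertices m n q"
    show "LL u v - mat3 (-1) (-1) 0 (-1) 0 (-1) 0 (-1) 1 (case u of VX _ \<Rightarrow> C1 | VY _ \<Rightarrow> C2 | VZ _ \<Rightarrow> C3)
            (case v of VX _ \<Rightarrow> C1 | VY _ \<Rightarrow> C2 | VZ _ \<Rightarrow> C3) \<in> J"
      using uv q by (cases u; cases v; auto simp add: ideal_zero[OF J] jx jy jz le1_nat jy[unfolded One_nat_def] jz[unfolded One_nat_def])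
  next
    show "det3 (mat3 (-1) (-1) 0 (-1) 0 (-1) 0 (-1) 1) C1 C2 C3 C1 C2 C3 \<in> J"
      using ideal_zero[OF J] by (simp add: det3_def)
  qed
  show "ideal_gen ?G \<subseteq> CI m n q"
  proof (rule ideal_gen_least[OF CI_ideal], safe)
    have I: "is_ideal (CI m n q)" by (rule CI_ideal)
    have "Var (VZ 1) - 1 = - (Var (VX 1) * Var (VY 1) * Var (VZ 1) - Var (VX 1) - Var (VZ 1))
       + (Var (VY 1) * Var (VZ 1) - 1) * (Var (VX 1) + 1) + (- Var (VZ 1)) * Var (VY 1)"
      by (simp add: algebra_simps)
    also have "\<dots> \<in> CI m n q"
      using m n q by (intro ideal_add[OF I] ideal_neg[OF I] ideal_mult[OF I] mXYZ gx_q1 gy2) auto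
    finally show "Var (VZ 1) - 1 \<in> CI m n q" .
  qed (use m n q in \<open>auto intro: gx_q1 gy2\<close>)
qed

lemma case6:
  assumes m: "2 \<le> m" and n: "n = 1" and q: "q = 1"
  shows "critical_ideal3 (tkk_vertices m n q) tkk_mult = ideal_gen
       ({Var (VX i) + 1 | i. i \<in> {1..m}} \<union> {Var (VZ 1) * Var (VY 1) + Var (VZ 1) - 1})" (is "_ = ideal_gen ?G")
proof
  define J where "J = ideal_gen ?G"
  have J: "is_ideal J" unfolding J_def by (rule ideal_gen_is_ideal)
  have jx: "Var (VX i) + 1 \<in> J" if "1 \<le> i" "i \<le> m" for i using that unfolding J_def by (intro ideal_gen_in) auto
  have jg: "Var (VZ 1) * Var (VY 1) + Var (VZ 1) - 1 \<in> J" unfolding J_def by (intro ideal_gen_in) auto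
  let ?B = "mat3 (-1) (-1) 0 (-1) (Var (VY 1)) (-1) 0 (-1) (Var (VZ 1))"
  show "CI m n q \<subseteq> ideal_gen ?G" unfolding J_def[symmetric]
  proof (rule subset_via_classes[OF J, where B = ?B
        and cls = "\<lambda>u. case u of VX _ \<Rightarrow> C1 | VY _ \<Rightarrow> C2 | VZ _ \<Rightarrow> C3"])
    fix u v assume uv: "u \<in> tkk_vertices m n q" "v \<in> tkk_vertices m n q"
    show "LL u v - ?B (case u of VX _ \<Rightarrow> C1 | VY _ \<Rightarrow> C2 | VZ _ \<Rightarrow> C3)
            (case v of VX _ \<Rightarrow> C1 | VY _ \<Rightarrow> C2 | VZ _ \<Rightarrow> C3) \<in> J"
      using uv n q by (cases u; cases v; auto simp add: ideal_zero[OF J] jx le1_nat)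
  next
    have "det3 ?B C1 C2 C3 C1 C2 C3 = - (Var (VZ 1) * Var (VY 1) + Var (VZ 1) - 1)"
      by (simp add: det3_def algebra_simps)
    then show "det3 ?B C1 C2 C3 C1 C2 C3 \<in> J"
      using ideal_neg[OF J jg] by simp
  qed
  show "ideal_gen ?G \<subseteq> CI m n q"
  proof (rule ideal_gen_least[OF CI_ideal], safe)
    have I: "is_ideal (CI m n q)" by (rule CI_ideal)
    have "Var (VZ 1) * Var (VY 1) + Var (VZ 1) - 1 = - (Var (VX 1) * Var (VY 1) * Var (VZ 1) - Var (VX 1) - Var (VZ 1))
       + (Var (VY 1) * Var (VZ 1) - 1) * (Var (VX 1) + 1)"
      by (simp add: algebra_simps)
    also have "\<dots> \<in> CI m n q"
      using m n q by (intro ideal_add[OF I] ideal_neg[OF I] ideal_mult[OF I] mXYZ gx_q1) auto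
    finally show "Var (VZ 1) * Var (VY 1) + Var (VZ 1) - 1 \<in> CI m n q" .
  qed (use m n q in \<open>auto intro: gx_q1\<close>)
qed

lemma case7:
  assumes m: "3 \<le> m" and n: "3 \<le> n" and q: "q = 0"
  shows "critical_ideal3 (tkk_vertices m n q) tkk_mult = ideal_gen
       ({Var (VX i) + 1 | i. i \<in> {1..m}} \<union> {Var (VY j) | j. j \<in> {1..n}})" (is "_ = ideal_gen ?G")
proof
  define J where "J = ideal_gen ?G"
  have J: "is_ideal J" unfolding J_def by (rule ideal_gen_is_ideal)
  have jx: "Var (VX i) + 1 \<in> J" if "1 \<le> i" "i \<le> m" for i using that unfolding J_def by (intro ideal_gen_in) auto
  have jy: "Var (VY i) \<in> J" if "1 \<le> i" "i \<le> n" for i using that unfolding J_def by (intro ideal_gen_in) auto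
  show "CI m n q \<subseteq> ideal_gen ?G" unfolding J_def[symmetric]
  proof (rule subset_via_classes[OF J, where B = "mat3 (-1) (-1) 0 (-1) 0 0 0 0 0"
        and cls = "\<lambda>u. case u of VX _ \<Rightarrow> C1 | VY _ \<Rightarrow> C2 | VZ _ \<Rightarrow> C3"])
    fix u v assume uv: "u \<in> tkk_vertices m n q" "v \<in> tkk_vertices m n q"
    show "LL u v - mat3 (-1) (-1) 0 (-1) 0 0 0 0 0 (case u of VX _ \<Rightarrow> C1 | VY _ \<Rightarrow> C2 | VZ _ \<Rightarrow> C3)
            (case v of VX _ \<Rightarrow> C1 | VY _ \<Rightarrow> C2 | VZ _ \<Rightarrow> C3) \<in> J"
      using uv q by (cases u; cases v; auto simp add: ideal_zero[OF J] jx jy)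
  next
    show "det3 (mat3 (-1) (-1) 0 (-1) 0 0 0 0 0) C1 C2 C3 C1 C2 C3 \<in> J"
      using ideal_zero[OF J] by (simp add: det3_def)
  qed
  show "ideal_gen ?G \<subseteq> CI m n q"
    by (rule ideal_gen_least[OF CI_ideal]) (use m n q in \<open>auto intro: gx_3 gy3\<close>)
qed

lemma case8:
  assumes m: "m = 2" and n: "3 \<le> n" and q: "q = 0"
  shows "critical_ideal3 (tkk_vertices m n q) tkk_mult = ideal_gen
       ({Var (VX 1) + Var (VX 2) + 2} \<union> {Var (VY j) | j. j \<in> {1..n}})" (is "_ = ideal_gen ?G")
proof
  define J where "J = ideal_gen ?G"
  have J: "is_ideal J" unfolding J_def by (rule ideal_gen_is_ideal)
  have jx: "Var (VX 1) + Var (VX 2) + 2 \<in> J" unfolding J_def by (intro ideal_gen_in) auto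
  have jy: "Var (VY i) \<in> J" if "1 \<le> i" "i \<le> n" for i using that unfolding J_def by (intro ideal_gen_in) auto
  let ?B = "mat3 (Var (VX 1)) (-1) (-1) (-1) (Var (VX 2)) (-1) (-1) (-1) 0"
  let ?c = "\<lambda>u. case u of VX i \<Rightarrow> (if i = 1 then C1 else C2) | VY _ \<Rightarrow> C3 | VZ _ \<Rightarrow> C3"
  show "CI m n q \<subseteq> ideal_gen ?G" unfolding J_def[symmetric]
  proof (rule subset_via_classes[OF J, where B = ?B and cls = ?c])
    fix u v assume uv: "u \<in> tkk_vertices m n q" "v \<in> tkk_vertices m n q"
    show "LL u v - ?B (?c u) (?c v) \<in> J"
      using uv m q by (cases u; cases v; auto simp add: ideal_zero[OF J] jy le2_nat)
  next
    have "det3 ?B C1 C2 C3 C1 C2 C3 = - (Var (VX 1) + Var (VX 2) + 2)"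
      by (simp add: det3_def algebra_simps)
    then show "det3 ?B C1 C2 C3 C1 C2 C3 \<in> J"
      using ideal_neg[OF J jx] by simp
  qed
  show "ideal_gen ?G \<subseteq> CI m n q"
  proof (rule ideal_gen_least[OF CI_ideal], safe)
    have I: "is_ideal (CI m n q)" by (rule CI_ideal)
    have "det3 LL (VX 1) (VX 2) (VY 1) (VX 1) (VX 2) (VY 1) = Var (VX 1) * Var (VX 2) * Var (VY 1) - Var (VX 1) - Var (VX 2) - Var (VY 1) - 2"
      by (simp add: det3_def algebra_simps)
    moreover have "det3 LL (VX 1) (VX 2) (VY 1) (VX 1) (VX 2) (VY 1) \<in> CI m n q"
      using m n q by (intro minor_in) auto
    ultimately have M: "Var (VX 1) * Var (VX 2) * Var (VY 1) - Var (VX 1) - Var (VX 2) - Var (VY 1) - 2 \<in> CI m n q" by simp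
    have "Var (VX 1) + Var (VX 2) + 2 = - (Var (VX 1) * Var (VX 2) * Var (VY 1) - Var (VX 1) - Var (VX 2) - Var (VY 1) - 2)
       + (Var (VX 1) * Var (VX 2) - 1) * Var (VY 1)"
      by (simp add: algebra_simps)
    also have "\<dots> \<in> CI m n q"
      using m n q by (intro ideal_add[OF I] ideal_neg[OF I] ideal_mult[OF I] M gy3) auto
    finally show "Var (VX 1) + Var (VX 2) + 2 \<in> CI m n q" .
  qed (use m n q in \<open>auto intro: gy3\<close>)
qed

lemma case9:
  assumes m: "3 \<le> m" and n: "n = 2" and q: "q = 0"
  shows "critical_ideal3 (tkk_vertices m n q) tkk_mult = ideal_gen
       ({Var (VX i) + 1 | i. i \<in> {1..m}} \<union> {Var (VY 1) * Var (VY 2) + Var (VY 1) + Var (VY 2)})" (is "_ = ideal_gen ?G")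
proof
  define J where "J = ideal_gen ?G"
  have J: "is_ideal J" unfolding J_def by (rule ideal_gen_is_ideal)
  have jx: "Var (VX i) + 1 \<in> J" if "1 \<le> i" "i \<le> m" for i using that unfolding J_def by (intro ideal_gen_in) auto
  have jg: "Var (VY 1) * Var (VY 2) + Var (VY 1) + Var (VY 2) \<in> J" unfolding J_def by (intro ideal_gen_in) auto
  let ?B = "mat3 (-1) (-1) (-1) (-1) (Var (VY 1)) 0 (-1) 0 (Var (VY 2))"
  let ?c = "\<lambda>u. case u of VX _ \<Rightarrow> C1 | VY j \<Rightarrow> (if j = 1 then C2 else C3) | VZ _ \<Rightarrow> C1"
  show "CI m n q \<subseteq> ideal_gen ?G" unfolding J_def[symmetric]
  proof (rule subset_via_classes[OF J, where B = ?B and cls = ?c])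
    fix u v assume uv: "u \<in> tkk_vertices m n q" "v \<in> tkk_vertices m n q"
    show "LL u v - ?B (?c u) (?c v) \<in> J"
      using uv n q by (cases u; cases v; auto simp add: ideal_zero[OF J] jx le2_nat)
  next
    have "det3 ?B C1 C2 C3 C1 C2 C3 = - (Var (VY 1) * Var (VY 2) + Var (VY 1) + Var (VY 2))"
      by (simp add: det3_def algebra_simps)
    then show "det3 ?B C1 C2 C3 C1 C2 C3 \<in> J"
      using ideal_neg[OF J jg] by simp
  qed
  show "ideal_gen ?G \<subseteq> CI m n q"
  proof (rule ideal_gen_least[OF CI_ideal], safe)
    have I: "is_ideal (CI m n q)" by (rule CI_ideal)
    have "det3 LL (VX 1) (VY 1) (VY 2) (VX 1) (VY 1) (VY 2) = Var (VX 1) * Var (VY 1) * Var (VY 2) - Var (VY 1) - Var (VY 2)"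
      by (simp add: det3_def algebra_simps)
    moreover have "det3 LL (VX 1) (VY 1) (VY 2) (VX 1) (VY 1) (VY 2) \<in> CI m n q"
      using m n q by (intro minor_in) auto
    ultimately have M: "Var (VX 1) * Var (VY 1) * Var (VY 2) - Var (VY 1) - Var (VY 2) \<in> CI m n q" by simp
    have "Var (VY 1) * Var (VY 2) + Var (VY 1) + Var (VY 2) = - (Var (VX 1) * Var (VY 1) * Var (VY 2) - Var (VY 1) - Var (VY 2))
       + (Var (VY 1) * Var (VY 2)) * (Var (VX 1) + 1)"
      by (simp add: algebra_simps)
    also have "\<dots> \<in> CI m n q"
      using m n q by (intro ideal_add[OF I] ideal_neg[OF I] ideal_mult[OF I] M gx_3) auto
    finally show "Var (VY 1) * Var (VY 2) + Var (VY 1) + Var (VY 2) \<in> CI m n q" .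
  qed (use m n q in \<open>auto intro: gx_3\<close>)
qed

lemma case10:
  assumes m: "m = 2" and n: "n = 2" and q: "q = 0"
  shows "critical_ideal3 (tkk_vertices m n q) tkk_mult = ideal_gen
       {Var (VX 1) + Var (VX 2) + 2, Var (VX 2) * Var (VY 1) + Var (VY 1),
        Var (VX 2) * Var (VY 2) + Var (VY 2),
        Var (VY 1) * Var (VY 2) + Var (VY 1) + Var (VY 2)}" (is "_ = ideal_gen ?G")
proof
  have V: "tkk_vertices m n q = {VX 1, VX 2, VY 1, VY 2}"
    using m n q unfolding tkk_vertices_def by (auto simp: le2_nat)
  define J where "J = ideal_gen ?G"
  have J: "is_ideal J" unfolding J_def by (rule ideal_gen_is_ideal)
  have gens: "Var (VX 1) + Var (VX 2) + 2 \<in> J" "Var (VX 2) * Var (VY 1) + Var (VY 1) \<in> J"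
    "Var (VX 2) * Var (VY 2) + Var (VY 2) \<in> J" "Var (VY 1) * Var (VY 2) + Var (VY 1) + Var (VY 2) \<in> J"
    unfolding J_def by (intro ideal_gen_in; simp)+
  show "CI m n q \<subseteq> ideal_gen ?G" unfolding J_def[symmetric]
  proof (rule subset_4pts[OF J V])
    fix a b c
    assume abc: "(a, b, c) \<in> {(VX 1, VX 2, VY 1), (VX 1, VX 2, VY 2), (VX 1, VY 1, VY 2), (VX 2, VY 1, VY 2)}"
    have m1: "det3 LL (VX 1) (VX 2) (VY 1) (VX 1) (VX 2) (VY 1) \<in> J"
    proof -
      have "det3 LL (VX 1) (VX 2) (VY 1) (VX 1) (VX 2) (VY 1) = ((-1) + 1 * Var (VX 2) * Var (VY 1)) * (Var (VX 1) + Var (VX 2) + 2) + ((-1) + (-1) * Var (VX 2)) * (Var (VX 2) * Var (VY 1) + Var (VY 1))"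
        by (simp add: det3_def algebra_simps)
      then show ?thesis by (simp only:) (intro ideal_add[OF J] ideal_mult[OF J] gens)
    qed
    have m2: "det3 LL (VX 1) (VX 2) (VY 1) (VX 1) (VX 2) (VY 2) \<in> J"
    proof -
      have "det3 LL (VX 1) (VX 2) (VY 1) (VX 1) (VX 2) (VY 2) = ((-1)) * (Var (VX 1) + Var (VX 2) + 2)"
        by (simp add: det3_def algebra_simps)
      then show ?thesis by (simp only:) (intro ideal_add[OF J] ideal_mult[OF J] gens)
    qed
    have m3: "det3 LL (VX 1) (VX 2) (VY 1) (VX 1) (VY 1) (VY 2) \<in> J"
    proof -
      have "det3 LL (VX 1) (VX 2) (VY 1) (VX 1) (VY 1) (VY 2) = (1 * Var (VY 1)) * (Var (VX 1) + Var (VX 2) + 2) + ((-1)) * (Var (VX 2) * Var (VY 1) + Var (VY 1))"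
        by (simp add: det3_def algebra_simps)
      then show ?thesis by (simp only:) (intro ideal_add[OF J] ideal_mult[OF J] gens)
    qed
    have m4: "det3 LL (VX 1) (VX 2) (VY 1) (VX 2) (VY 1) (VY 2) \<in> J"
    proof -
      have "det3 LL (VX 1) (VX 2) (VY 1) (VX 2) (VY 1) (VY 2) = ((-1)) * (Var (VX 2) * Var (VY 1) + Var (VY 1))"
        by (simp add: det3_def algebra_simps)
      then show ?thesis by (simp only:) (intro ideal_add[OF J] ideal_mult[OF J] gens)
    qed
    have m5: "det3 LL (VX 1) (VX 2) (VY 2) (VX 1) (VX 2) (VY 1) \<in> J"
    proof -
      have "det3 LL (VX 1) (VX 2) (VY 2) (VX 1) (VX 2) (VY 1) = ((-1)) * (Var (VX 1) + Var (VX 2) + 2)"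
        by (simp add: det3_def algebra_simps)
      then show ?thesis by (simp only:) (intro ideal_add[OF J] ideal_mult[OF J] gens)
    qed
    have m6: "det3 LL (VX 1) (VX 2) (VY 2) (VX 1) (VX 2) (VY 2) \<in> J"
    proof -
      have "det3 LL (VX 1) (VX 2) (VY 2) (VX 1) (VX 2) (VY 2) = ((-1) + 1 * Var (VX 2) * Var (VY 2)) * (Var (VX 1) + Var (VX 2) + 2) + ((-1) + (-1) * Var (VX 2)) * (Var (VX 2) * Var (VY 2) + Var (VY 2))"
        by (simp add: det3_def algebra_simps)
      then show ?thesis by (simp only:) (intro ideal_add[OF J] ideal_mult[OF J] gens)
    qed
    have m7: "det3 LL (VX 1) (VX 2) (VY 2) (VX 1) (VY 1) (VY 2) \<in> J"
    proof -
      have "det3 LL (VX 1) (VX 2) (VY 2) (VX 1) (VY 1) (VY 2) = ((-1) * Var (VY 2)) * (Var (VX 1) + Var (VX 2) + 2) + (1) * (Var (VX 2) * Var (VY 2) + Var (VY 2))"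
        by (simp add: det3_def algebra_simps)
      then show ?thesis by (simp only:) (intro ideal_add[OF J] ideal_mult[OF J] gens)
    qed
    have m8: "det3 LL (VX 1) (VX 2) (VY 2) (VX 2) (VY 1) (VY 2) \<in> J"
    proof -
      have "det3 LL (VX 1) (VX 2) (VY 2) (VX 2) (VY 1) (VY 2) = (1) * (Var (VX 2) * Var (VY 2) + Var (VY 2))"
        by (simp add: det3_def algebra_simps)
      then show ?thesis by (simp only:) (intro ideal_add[OF J] ideal_mult[OF J] gens)
    qed
    have m9: "det3 LL (VX 1) (VY 1) (VY 2) (VX 1) (VX 2) (VY 1) \<in> J"
    proof -
      have "det3 LL (VX 1) (VY 1) (VY 2) (VX 1) (VX 2) (VY 1) = (1 * Var (VY 1)) * (Var (VX 1) + Var (VX 2) + 2) + ((-1)) * (Var (VX 2) * Var (VY 1) + Var (VY 1))"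
        by (simp add: det3_def algebra_simps)
      then show ?thesis by (simp only:) (intro ideal_add[OF J] ideal_mult[OF J] gens)
    qed
    have m10: "det3 LL (VX 1) (VY 1) (VY 2) (VX 1) (VX 2) (VY 2) \<in> J"
    proof -
      have "det3 LL (VX 1) (VY 1) (VY 2) (VX 1) (VX 2) (VY 2) = ((-1) * Var (VY 2)) * (Var (VX 1) + Var (VX 2) + 2) + (1) * (Var (VX 2) * Var (VY 2) + Var (VY 2))"
        by (simp add: det3_def algebra_simps)
      then show ?thesis by (simp only:) (intro ideal_add[OF J] ideal_mult[OF J] gens)
    qed
    have m11: "det3 LL (VX 1) (VY 1) (VY 2) (VX 1) (VY 1) (VY 2) \<in> J"
    proof -
      have "det3 LL (VX 1) (VY 1) (VY 2) (VX 1) (VY 1) (VY 2) = (1 * Var (VY 1) * Var (VY 2)) * (Var (VX 1) + Var (VX 2) + 2) + ((-1) * Var (VY 2)) * (Var (VX 2) * Var (VY 1) + Var (VY 1)) + ((-1)) * (Var (VY 1) * Var (VY 2) + Var (VY 1) + Var (VY 2))"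
        by (simp add: det3_def algebra_simps)
      then show ?thesis by (simp only:) (intro ideal_add[OF J] ideal_mult[OF J] gens)
    qed
    have m12: "det3 LL (VX 1) (VY 1) (VY 2) (VX 2) (VY 1) (VY 2) \<in> J"
    proof -
      have "det3 LL (VX 1) (VY 1) (VY 2) (VX 2) (VY 1) (VY 2) = ((-1)) * (Var (VY 1) * Var (VY 2) + Var (VY 1) + Var (VY 2))"
        by (simp add: det3_def algebra_simps)
      then show ?thesis by (simp only:) (intro ideal_add[OF J] ideal_mult[OF J] gens)
    qed
    have m13: "det3 LL (VX 2) (VY 1) (VY 2) (VX 1) (VX 2) (VY 1) \<in> J"
    proof -
      have "det3 LL (VX 2) (VY 1) (VY 2) (VX 1) (VX 2) (VY 1) = ((-1)) * (Var (VX 2) * Var (VY 1) + Var (VY 1))"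
        by (simp add: det3_def algebra_simps)
      then show ?thesis by (simp only:) (intro ideal_add[OF J] ideal_mult[OF J] gens)
    qed
    have m14: "det3 LL (VX 2) (VY 1) (VY 2) (VX 1) (VX 2) (VY 2) \<in> J"
    proof -
      have "det3 LL (VX 2) (VY 1) (VY 2) (VX 1) (VX 2) (VY 2) = (1) * (Var (VX 2) * Var (VY 2) + Var (VY 2))"
        by (simp add: det3_def algebra_simps)
      then show ?thesis by (simp only:) (intro ideal_add[OF J] ideal_mult[OF J] gens)
    qed
    have m15: "det3 LL (VX 2) (VY 1) (VY 2) (VX 1) (VY 1) (VY 2) \<in> J"
    proof -
      have "det3 LL (VX 2) (VY 1) (VY 2) (VX 1) (VY 1) (VY 2) = ((-1)) * (Var (VY 1) * Var (VY 2) + Var (VY 1) + Var (VY 2))"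
        by (simp add: det3_def algebra_simps)
      then show ?thesis by (simp only:) (intro ideal_add[OF J] ideal_mult[OF J] gens)
    qed
    have m16: "det3 LL (VX 2) (VY 1) (VY 2) (VX 2) (VY 1) (VY 2) \<in> J"
    proof -
      have "det3 LL (VX 2) (VY 1) (VY 2) (VX 2) (VY 1) (VY 2) = (1 * Var (VY 2)) * (Var (VX 2) * Var (VY 1) + Var (VY 1)) + ((-1)) * (Var (VY 1) * Var (VY 2) + Var (VY 1) + Var (VY 2))"
        by (simp add: det3_def algebra_simps)
      then show ?thesis by (simp only:) (intro ideal_add[OF J] ideal_mult[OF J] gens)
    qed
    show "det3 LL a b c (VX 1) (VX 2) (VY 1) \<in> J \<and> det3 LL a b c (VX 1) (VX 2) (VY 2) \<in> J \<and>
          det3 LL a b c (VX 1) (VY 1) (VY 2) \<in> J \<and> det3 LL a b c (VX 2) (VY 1) (VY 2) \<in> J"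
      using abc m1 m2 m3 m4 m5 m6 m7 m8 m9 m10 m11 m12 m13 m14 m15 m16 by auto
  qed
  show "ideal_gen ?G \<subseteq> CI m n q"
  proof (rule ideal_gen_least[OF CI_ideal], safe)
    have I: "is_ideal (CI m n q)" by (rule CI_ideal)
    have "det3 LL (VX 1) (VX 2) (VY 1) (VX 1) (VX 2) (VY 2) = - (Var (VX 1) + Var (VX 2) + 2)"
      by (simp add: det3_def algebra_simps)
    moreover have "det3 LL (VX 1) (VX 2) (VY 1) (VX 1) (VX 2) (VY 2) \<in> CI m n q"
      using m n q by (intro minor_in) auto
    ultimately show "Var (VX 1) + Var (VX 2) + 2 \<in> CI m n q" by (metis ideal_neg_iff I)
  next
    have I: "is_ideal (CI m n q)" by (rule CI_ideal)
    have "det3 LL (VX 1) (VX 2) (VY 1) (VX 2) (VY 1) (VY 2) = - (Var (VX 2) * Var (VY 1) + Var (VY 1))"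
      by (simp add: det3_def algebra_simps)
    moreover have "det3 LL (VX 1) (VX 2) (VY 1) (VX 2) (VY 1) (VY 2) \<in> CI m n q"
      using m n q by (intro minor_in) auto
    ultimately show "Var (VX 2) * Var (VY 1) + Var (VY 1) \<in> CI m n q" by (metis ideal_neg_iff I)
  next
    have "det3 LL (VX 1) (VX 2) (VY 2) (VX 2) (VY 1) (VY 2) = Var (VX 2) * Var (VY 2) + Var (VY 2)"
      by (simp add: det3_def algebra_simps)
    moreover have "det3 LL (VX 1) (VX 2) (VY 2) (VX 2) (VY 1) (VY 2) \<in> CI m n q"
      using m n q by (intro minor_in) auto
    ultimately show "Var (VX 2) * Var (VY 2) + Var (VY 2) \<in> CI m n q" by simp
  next
    have I: "is_ideal (CI m n q)" by (rule CI_ideal)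
    have "det3 LL (VX 1) (VY 1) (VY 2) (VX 2) (VY 1) (VY 2) = - (Var (VY 1) * Var (VY 2) + Var (VY 1) + Var (VY 2))"
      by (simp add: det3_def algebra_simps)
    moreover have "det3 LL (VX 1) (VY 1) (VY 2) (VX 2) (VY 1) (VY 2) \<in> CI m n q"
      using m n q by (intro minor_in) auto
    ultimately show "Var (VY 1) * Var (VY 2) + Var (VY 1) + Var (VY 2) \<in> CI m n q" by (metis ideal_neg_iff I)
  qed
qed

theorem theorem4p5:
  fixes m n q :: nat
  assumes "m \<ge> q" and "m + n + q \<ge> 4"
    and "graph_connected (tkk_vertices m n q) tkk_adj"
    and "\<not> graph_complete (tkk_vertices m n q) tkk_adj"
    and "\<not> graph_complete_bipartite (tkk_vertices m n q) tkk_adj"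
  shows
   "(m \<ge> 2 \<and> n \<ge> 2 \<and> q \<ge> 2 \<longrightarrow> critical_ideal3 (tkk_vertices m n q) tkk_mult = ideal_gen
       ({2} \<union> {Var (VX i) + 1 | i. i \<in> {1..m}} \<union> {Var (VY j) | j. j \<in> {1..n}}
            \<union> {Var (VZ k) + 1 | k. k \<in> {1..q}})) \<and>
    (m \<ge> 2 \<and> n = 1 \<and> q \<ge> 2 \<longrightarrow> critical_ideal3 (tkk_vertices m n q) tkk_mult = ideal_gen
       ({Var (VX i) + 1 | i. i \<in> {1..m}} \<union> {Var (VY 1) + 2}
            \<union> {Var (VZ k) + 1 | k. k \<in> {1..q}})) \<and>
    (m \<ge> 2 \<and> n \<ge> 2 \<and> q = 1 \<longrightarrow> critical_ideal3 (tkk_vertices m n q) tkk_mult = ideal_gen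
       ({Var (VX i) + 1 | i. i \<in> {1..m}} \<union> {Var (VY j) | j. j \<in> {1..n}} \<union> {Var (VZ 1) - 1})) \<and>
    (m = 1 \<and> n \<ge> 3 \<and> q = 1 \<longrightarrow> critical_ideal3 (tkk_vertices m n q) tkk_mult = ideal_gen
       ({Var (VX 1) + Var (VZ 1)} \<union> {Var (VY j) | j. j \<in> {1..n}})) \<and>
    (m = 1 \<and> n = 2 \<and> q = 1 \<longrightarrow> critical_ideal3 (tkk_vertices m n q) tkk_mult = ideal_gen
       {Var (VX 1) + Var (VZ 1), Var (VY 1) + Var (VY 2), Var (VY 2) * Var (VZ 1)}) \<and>
    (m \<ge> 2 \<and> n = 1 \<and> q = 1 \<longrightarrow> critical_ideal3 (tkk_vertices m n q) tkk_mult = ideal_gen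
       ({Var (VX i) + 1 | i. i \<in> {1..m}} \<union> {Var (VZ 1) * Var (VY 1) + Var (VZ 1) - 1})) \<and>
    (m \<ge> 3 \<and> n \<ge> 3 \<and> q = 0 \<longrightarrow> critical_ideal3 (tkk_vertices m n q) tkk_mult = ideal_gen
       ({Var (VX i) + 1 | i. i \<in> {1..m}} \<union> {Var (VY j) | j. j \<in> {1..n}})) \<and>
    (m = 2 \<and> n \<ge> 3 \<and> q = 0 \<longrightarrow> critical_ideal3 (tkk_vertices m n q) tkk_mult = ideal_gen
       ({Var (VX 1) + Var (VX 2) + 2} \<union> {Var (VY j) | j. j \<in> {1..n}})) \<and>
    (m \<ge> 3 \<and> n = 2 \<and> q = 0 \<longrightarrow> critical_ideal3 (tkk_vertices m n q) tkk_mult = ideal_gen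
       ({Var (VX i) + 1 | i. i \<in> {1..m}} \<union> {Var (VY 1) * Var (VY 2) + Var (VY 1) + Var (VY 2)})) \<and>
    (m = 2 \<and> n = 2 \<and> q = 0 \<longrightarrow> critical_ideal3 (tkk_vertices m n q) tkk_mult = ideal_gen
       {Var (VX 1) + Var (VX 2) + 2, Var (VX 2) * Var (VY 1) + Var (VY 1),
        Var (VX 2) * Var (VY 2) + Var (VY 2),
        Var (VY 1) * Var (VY 2) + Var (VY 1) + Var (VY 2)})"
  proof -
  have nb: "\<not> (m = 1 \<and> q = 1 \<and> 1 \<le> n)" using assms(5) bip by blast
  show ?thesis
    apply (intro conjI impI)
    subgoal by (intro case1) auto
    subgoal by (intro case2) auto
    subgoal by (intro case3) auto
    subgoal using nb by (elim conjE; simp)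
    subgoal using nb by (elim conjE; simp)
    subgoal by (intro case6) auto
    subgoal by (intro case7) auto
    subgoal by (intro case8) auto
    subgoal by (intro case9) auto
    subgoal by (intro case10) auto
    done
qed

end
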